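(* Let $K$ be a connected 4-regular simple graph with an odd number of vertices, let $v,w$ be adjacent vertices of $K$ having exactly one common neighbour $c$, let the neighbours of $w$ be $v,a,b,c$ and the neighbours of $v$ be $w,c,d,e$, and let $S=K-\{v,w\}$. There is a fixed-point free involution on $\mathcal{S}_{\{a,b,c\},\{d,e\}}\cup\mathcal{S}_{\{a,b\},\{c,d,e\}}$, and thus $s_{\{a,b,c\},\{d,e\}}+s_{\{a,b\},\{c,d,e\}}\equiv 0\pmod 2$.
   Context: A spanning 2-forest is a spanning forest with exactly two trees (a tree may be a single vertex). For a bipartition $P=\{P_1,P_2\}$ of a subset of $V(S)$, $\mathcal{S}_P$ is the set of bipartitions of $E(S)$ such that one part is the edge set of a spanning tree of $S$ and the other is the edge set of a spanning 2-forest of $S$ with one tree containing all vertices of $P_1$ and the other containing all vertices of $P_2$; $s_P=|\mathcal{S}_P|$. *)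

theory Defs
  imports Main
begin

definition adj :: "'a set set \<Rightarrow> 'a \<Rightarrow> 'a \<Rightarrow> bool" where
  "adj F x y \<longleftrightarrow> {x, y} \<in> F"

definition simple_graph :: "'a set \<Rightarrow> 'a set set \<Rightarrow> bool" where
  "simple_graph V E \<longleftrightarrow> finite V \<and>
     (\<forall>e\<in>E. \<exists>x y. x \<noteq> y \<and> x \<in> V \<and> y \<in> V \<and> e = {x, y})"

definition nbrs :: "'a set set \<Rightarrow> 'a \<Rightarrow> 'a set" where
  "nbrs E x = {y. {x, y} \<in> E}"

definition regular :: "nat \<Rightarrow> 'a set \<Rightarrow> 'a set set \<Rightarrow> bool" where
  "regular k V E \<longleftrightarrow> (\<forall>x\<in>V. card (nbrs E x) = k)"

definition connected_on :: "'a set \<Rightarrow> 'a set set \<Rightarrow> bool" where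
  "connected_on W F \<longleftrightarrow> (\<forall>x\<in>W. \<forall>y\<in>W. (adj F)\<^sup>*\<^sup>* x y)"

definition has_cycle :: "'a set set \<Rightarrow> bool" where
  "has_cycle F \<longleftrightarrow> (\<exists>xs. length xs \<ge> 3 \<and> distinct xs \<and>
      (\<forall>i < length xs. {xs ! i, xs ! ((i + 1) mod length xs)} \<in> F))"

definition spanning_tree :: "'a set \<Rightarrow> 'a set set \<Rightarrow> 'a set set \<Rightarrow> bool" where
  "spanning_tree W ES T \<longleftrightarrow> T \<subseteq> ES \<and> connected_on W T \<and> \<not> has_cycle T"

definition spanning_2forest_sep ::
  "'a set \<Rightarrow> 'a set set \<Rightarrow> 'a set set \<Rightarrow> 'a set \<Rightarrow> 'a set \<Rightarrow> bool" where
  "spanning_2forest_sep W ES F P1 P2 \<longleftrightarrow> F \<subseteq> ES \<and> \<not> has_cycle F \<and>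
     (\<exists>W1 W2. W1 \<noteq> {} \<and> W2 \<noteq> {} \<and> W1 \<inter> W2 = {} \<and> W1 \<union> W2 = W \<and>
        connected_on W1 F \<and> connected_on W2 F \<and>
        (\<forall>x\<in>W1. \<forall>y\<in>W2. {x, y} \<notin> F) \<and>
        P1 \<subseteq> W1 \<and> P2 \<subseteq> W2)"

definition SP :: "'a set \<Rightarrow> 'a set set \<Rightarrow> 'a set \<Rightarrow> 'a set \<Rightarrow> 'a set set set set" where
  "SP W ES P1 P2 = {{T, ES - T} | T. spanning_tree W ES T \<and>
                                      spanning_2forest_sep W ES (ES - T) P1 P2}"

definition sP :: "'a set \<Rightarrow> 'a set set \<Rightarrow> 'a set \<Rightarrow> 'a set \<Rightarrow> nat" where
  "sP W ES P1 P2 = card (SP W ES P1 P2)"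

end

theory Submission
  imports Defs
begin

lemma adj_sym: "adj F x y = adj F y x" by (simp add: adj_def insert_commute)

lemma rtc_sym: "(adj F)\<^sup>*\<^sup>* x y \<Longrightarrow> (adj F)\<^sup>*\<^sup>* y x"
proof (induction rule: rtranclp_induct)
  case base show ?case by simp
next
  case (step y z)
  have "adj F z y" using step(2) adj_sym by metis
  then show ?case using step(3) by (rule converse_rtranclp_into_rtranclp)
qed

lemma rtc_map:
  assumes "R\<^sup>*\<^sup>* u u'" "\<And>z z'. R z z' \<Longrightarrow> g z = g z' \<or> S (g z) (g z')"
  shows "S\<^sup>*\<^sup>* (g u) (g u')"
  using assms(1)
proof (induction rule: rtranclp_induct)
  case base then show ?case by simp
next
  case (step y z) then show ?case using assms(2)[of y z]
    by (metis rtranclp.rtrancl_into_rtrancl)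
qed

lemma path_avoid:
  assumes "(adj G)\<^sup>*\<^sup>* p q" "p \<noteq> c" "q \<noteq> c" "{c,y} \<in> G"
    "\<forall>z. {c,z} \<in> G \<longrightarrow> z = y" "y \<noteq> c"
  shows "(adj (G - {{c,y}} \<union> {{c,x}}))\<^sup>*\<^sup>* p q"
proof -
  let ?g = "\<lambda>u. if u = c then y else u"
  have "(adj (G - {{c,y}} \<union> {{c,x}}))\<^sup>*\<^sup>* (?g p) (?g q)"
  proof (rule rtc_map[OF assms(1)])
    fix z z' assume "adj G z z'"
    hence zz: "{z,z'} \<in> G" by (simp add: adj_def)
    show "?g z = ?g z' \<or> adj (G - {{c,y}} \<union> {{c,x}}) (?g z) (?g z')"
    proof (cases "z = c \<or> z' = c")
      case True
      then show ?thesis using zz assms(5,6) by (auto simp: insert_commute)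
    next
      case False
      then have "{z,z'} \<noteq> {c,y}" by (auto simp: doubleton_eq_iff)
      then show ?thesis using zz False by (auto simp: adj_def)
    qed
  qed
  then show ?thesis using assms(2,3) by simp
qed

lemma cycle_two_nbrs:
  assumes "length xs \<ge> 3" "distinct xs"
    "\<forall>i<length xs. {xs!i, xs!((i+1) mod length xs)} \<in> F" "c \<in> set xs"
  shows "\<exists>z1 z2. z1 \<noteq> z2 \<and> {c,z1} \<in> F \<and> {c,z2} \<in> F"
proof -
  let ?n = "length xs"
  obtain i where i: "i < ?n" "xs!i = c" by (metis assms(4) in_set_conv_nth)
  define j where "j = (if i+1 = ?n then 0 else i+1)"
  define k where "k = (if i = 0 then ?n - 1 else i - 1)"
  have j: "j < ?n" "(i+1) mod ?n = j" using i assms(1) by (auto simp: j_def)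
  have k: "k < ?n" "(k+1) mod ?n = i" using i assms(1) by (auto simp: k_def)
  have "j \<noteq> k" using i assms(1) by (auto simp: j_def k_def)
  hence "xs!j \<noteq> xs!k" using j k assms(2) by (simp add: nth_eq_iff_index_eq)
  moreover have "{c, xs!j} \<in> F" using assms(3) i j by metis
  moreover have "{c, xs!k} \<in> F" using assms(3)[rule_format, OF k(1)] k i
    by (simp add: insert_commute)
  ultimately show ?thesis by blast
qed

lemma acyclic_move:
  assumes "\<not> has_cycle G" "{c,y} \<in> G" "\<forall>z. {c,z} \<in> G \<longrightarrow> z = y"
  shows "\<not> has_cycle (G - {{c,y}} \<union> {{c,x}})"
proof
  let ?H = "G - {{c,y}} \<union> {{c,x}}"
  assume "has_cycle ?H"
  then obtain xs where xs: "length xs \<ge> 3" "distinct xs"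
    "\<forall>i<length xs. {xs!i, xs!((i+1) mod length xs)} \<in> ?H"
    unfolding has_cycle_def by blast
  show False
  proof (cases "c \<in> set xs")
    case True
    then obtain z1 z2 where z: "z1 \<noteq> z2" "{c,z1} \<in> ?H" "{c,z2} \<in> ?H"
      using cycle_two_nbrs[OF xs True] by blast
    have "\<And>z. {c,z} \<in> ?H \<Longrightarrow> z = x" using assms(3) by (auto simp: doubleton_eq_iff)
    then show False using z by blast
  next
    case False
    have "\<forall>i<length xs. {xs!i, xs!((i+1) mod length xs)} \<in> G"
    proof (intro allI impI)
      fix i assume "i < length xs"
      moreover have "(i+1) mod length xs < length xs" using xs(1) by (intro mod_less_divisor) auto
      ultimately have "xs!i \<noteq> c" "xs!((i+1) mod length xs) \<noteq> c"
        using False by (metis nth_mem)+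
      then show "{xs!i, xs!((i+1) mod length xs)} \<in> G"
        using xs(3) \<open>i < length xs\<close> by (auto simp: doubleton_eq_iff)
    qed
    then have "has_cycle G" using xs(1,2) unfolding has_cycle_def by blast
    then show False using assms(1) by simp
  qed
qed


lemma conn_gen:
  assumes "\<forall>p\<in>S-{c}. \<forall>q\<in>S-{c}. (adj G)\<^sup>*\<^sup>* p q" "x \<in> S" "x \<noteq> c" "{c,y} \<in> G"
    "\<forall>z. {c,z} \<in> G \<longrightarrow> z = y" "y \<noteq> c"
  shows "connected_on (insert c S) (G - {{c,y}} \<union> {{c,x}})"
  unfolding connected_on_def
proof (intro ballI)
  let ?H = "G - {{c,y}} \<union> {{c,x}}"
  let ?r = "\<lambda>u. if u = c then x else u"
  have r: "?r u \<in> S - {c} \<and> (adj ?H)\<^sup>*\<^sup>* u (?r u)" if "u \<in> insert c S" for u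
  proof (cases "u = c")
    case True
    have "adj ?H c x" by (simp add: adj_def)
    then show ?thesis using True assms(2,3) by auto
  next
    case False then show ?thesis using that by auto
  qed
  fix u u' assume u: "u \<in> insert c S" and u': "u' \<in> insert c S"
  have "(adj ?H)\<^sup>*\<^sup>* (?r u) (?r u')"
    using r[OF u] r[OF u'] assms path_avoid[of G "?r u" "?r u'" c y x] by blast
  then show "(adj ?H)\<^sup>*\<^sup>* u u'"
    using r[OF u] r[OF u'] rtc_sym[of ?H u' "?r u'"] by (meson rtranclp_trans)
qed


lemma move_sides:
  assumes "Wc \<inter> Wo = {}" "c \<in> Wc" "y \<in> Wc" "Wo \<noteq> {}"
    "connected_on Wc F" "connected_on Wo F" "\<forall>p\<in>Wc. \<forall>q\<in>Wo. {p,q} \<notin> F"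
    "x \<in> Wc \<union> Wo" "x \<noteq> c" "y \<noteq> c" "{c,y} \<in> F" "\<forall>z. {c,z} \<in> F \<longrightarrow> z = y"
  shows "\<exists>Wc' Wo'. Wc' \<union> Wo' = Wc \<union> Wo \<and> Wc' \<inter> Wo' = {} \<and> Wc' \<noteq> {} \<and> Wo' \<noteq> {} \<and>
     connected_on Wc' (F - {{c,y}} \<union> {{c,x}}) \<and> connected_on Wo' (F - {{c,y}} \<union> {{c,x}}) \<and>
     (\<forall>p\<in>Wc'. \<forall>q\<in>Wo'. {p,q} \<notin> (F - {{c,y}} \<union> {{c,x}})) \<and>
     (\<forall>p\<in>Wo'. \<forall>q\<in>Wc'. {p,q} \<notin> (F - {{c,y}} \<union> {{c,x}})) \<and>
     Wc - {c} \<subseteq> Wc' \<and> Wo \<subseteq> Wo'"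
proof (cases "x \<in> Wc")
  case True
  have h: "\<forall>p\<in>Wc-{c}. \<forall>q\<in>Wc-{c}. (adj F)\<^sup>*\<^sup>* p q"
    using assms(5) unfolding connected_on_def by blast
  have "connected_on (insert c Wc) (F - {{c,y}} \<union> {{c,x}})"
    by (rule conn_gen[OF h True assms(9,11,12,10)])
  then have c1: "connected_on Wc (F - {{c,y}} \<union> {{c,x}})"
    using insert_absorb[OF assms(2)] by simp
  have c2: "connected_on Wo (F - {{c,y}} \<union> {{c,x}})"
    unfolding connected_on_def
  proof (intro ballI)
    fix p q assume "p \<in> Wo" "q \<in> Wo"
    then have "p \<noteq> c" "q \<noteq> c" "(adj F)\<^sup>*\<^sup>* p q"
      using assms(1,2,6) unfolding connected_on_def by auto
    then show "(adj (F - {{c,y}} \<union> {{c,x}}))\<^sup>*\<^sup>* p q"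
      using path_avoid assms(10,11,12) by metis
  qed
  have cr: "\<forall>p\<in>Wc. \<forall>q\<in>Wo. {p,q} \<notin> (F - {{c,y}} \<union> {{c,x}})"
    using assms(1,2,7) True by (auto simp: doubleton_eq_iff)
  have cr2: "\<forall>p\<in>Wo. \<forall>q\<in>Wc. {p,q} \<notin> (F - {{c,y}} \<union> {{c,x}})"
  proof (intro ballI)
    fix p q assume "p \<in> Wo" "q \<in> Wc"
    then have "{q,p} \<notin> (F - {{c,y}} \<union> {{c,x}})" using cr by blast
    moreover have "{p,q} = {q,p}" by (rule insert_commute)
    ultimately show "{p,q} \<notin> (F - {{c,y}} \<union> {{c,x}})" by simp
  qed
  show ?thesis
    apply (rule exI[of _ Wc], rule exI[of _ Wo])
    using c1 c2 cr cr2 assms(1,2,4) by blast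
next
  case False
  hence xo: "x \<in> Wo" using assms(8) by auto
  have c1: "connected_on (Wc - {c}) (F - {{c,y}} \<union> {{c,x}})"
    unfolding connected_on_def
  proof (intro ballI)
    fix p q assume "p \<in> Wc - {c}" "q \<in> Wc - {c}"
    then have "p \<noteq> c" "q \<noteq> c" "(adj F)\<^sup>*\<^sup>* p q"
      using assms(5) unfolding connected_on_def by auto
    then show "(adj (F - {{c,y}} \<union> {{c,x}}))\<^sup>*\<^sup>* p q"
      using path_avoid assms(10,11,12) by metis
  qed
  have cWo: "c \<notin> Wo" using assms(1,2) by auto
  have h: "\<forall>p\<in>Wo-{c}. \<forall>q\<in>Wo-{c}. (adj F)\<^sup>*\<^sup>* p q"
    using assms(6) unfolding connected_on_def by blast
  have c2: "connected_on (insert c Wo) (F - {{c,y}} \<union> {{c,x}})"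
    by (rule conn_gen[OF h xo assms(9,11,12,10)])
  have cr: "\<forall>p\<in>Wc - {c}. \<forall>q\<in>insert c Wo. {p,q} \<notin> (F - {{c,y}} \<union> {{c,x}})"
  proof (intro ballI notI)
    fix p q assume p: "p \<in> Wc - {c}" and q: "q \<in> insert c Wo"
      and pq: "{p,q} \<in> F - {{c,y}} \<union> {{c,x}}"
    show False
    proof (cases "{p,q} = {c,x}")
      case True then show False using p xo assms(1) by (auto simp: doubleton_eq_iff)
    next
      case False
      then have pqF: "{p,q} \<in> F" "{p,q} \<noteq> {c,y}" using pq by auto
      show False
      proof (cases "q = c")
        case True
        then have "p = y" using pqF assms(12) by (auto simp: insert_commute)
        then show False using pqF True by (auto simp: insert_commute)
      next
        case False
        then show False using q p pqF assms(7) by auto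
      qed
    qed
  qed
  have cr2: "\<forall>p\<in>insert c Wo. \<forall>q\<in>Wc - {c}. {p,q} \<notin> (F - {{c,y}} \<union> {{c,x}})"
  proof (intro ballI)
    fix p q assume "p \<in> insert c Wo" "q \<in> Wc - {c}"
    then have "{q,p} \<notin> (F - {{c,y}} \<union> {{c,x}})" using cr by blast
    moreover have "{p,q} = {q,p}" by (rule insert_commute)
    ultimately show "{p,q} \<notin> (F - {{c,y}} \<union> {{c,x}})" by simp
  qed
  show ?thesis
    apply (rule exI[of _ "Wc - {c}"], rule exI[of _ "insert c Wo"])
    using c1 c2 cr cr2 assms(1,2,3,10) by blast
qed


lemma even_invol:
  assumes "finite U" "\<forall>X\<in>U. f X \<in> U \<and> f (f X) = X \<and> f X \<noteq> X"
  shows "even (card U)"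
  using assms
proof (induction "card U" arbitrary: U rule: less_induct)
  case less
  show ?case
  proof (cases "U = {}")
    case True then show ?thesis by simp
  next
    case False
    then obtain X where X: "X \<in> U" by blast
    let ?U' = "U - {X, f X}"
    have sub: "{X, f X} \<subseteq> U" using X less.prems by auto
    have c2: "card {X, f X} = 2" using X less.prems by auto
    have cU: "card ?U' = card U - 2" using card_Diff_subset[OF _ sub] c2 less.prems(1)
      by (metis finite_subset sub)
    have ge: "card U \<ge> 2" using card_mono[OF less.prems(1) sub] c2 by simp
    have "even (card ?U')"
    proof (rule less.hyps)
      show "card ?U' < card U" using cU ge by simp
      show "finite ?U'" using less.prems by simp
      show "\<forall>Y\<in>?U'. f Y \<in> ?U' \<and> f (f Y) = Y \<and> f Y \<noteq> Y"
      proof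
        fix Y assume Y: "Y \<in> ?U'"
        have h: "f Y \<in> U" "f (f Y) = Y" "f Y \<noteq> Y" using Y less.prems by auto
        have "f Y \<noteq> X" using h Y by auto
        moreover have "f Y \<noteq> f X" using Y X less.prems h by (metis DiffD2 insertI1)
        ultimately show "f Y \<in> ?U' \<and> f (f Y) = Y \<and> f Y \<noteq> Y" using h by auto
      qed
    qed
    then show ?thesis using cU ge by simp
  qed
qed

lemma card4_distinct: "card {p,q,r,s} = 4 \<Longrightarrow> distinct [p,q,r,s]"
  by (rule card_distinct) simp



lemma sepE:
  assumes "spanning_2forest_sep W ES F P1 P2"
  obtains W1 W2 where "F \<subseteq> ES" "\<not> has_cycle F" "W1 \<noteq> {}" "W2 \<noteq> {}" "W1 \<inter> W2 = {}"
    "W1 \<union> W2 = W" "connected_on W1 F" "connected_on W2 F" "\<forall>x\<in>W1. \<forall>y\<in>W2. {x, y} \<notin> F"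
    "P1 \<subseteq> W1" "P2 \<subseteq> W2"
  using assms unfolding spanning_2forest_sep_def by (elim exE conjE) (rule that, assumption+)

lemma sepI:
  assumes "F \<subseteq> ES" "\<not> has_cycle F" "W1 \<noteq> {}" "W2 \<noteq> {}" "W1 \<inter> W2 = {}"
    "W1 \<union> W2 = W" "connected_on W1 F" "connected_on W2 F" "\<forall>x\<in>W1. \<forall>y\<in>W2. {x, y} \<notin> F"
    "P1 \<subseteq> W1" "P2 \<subseteq> W2"
  shows "spanning_2forest_sep W ES F P1 P2"
  unfolding spanning_2forest_sep_def using assms by (intro conjI exI[of _ W1] exI[of _ W2])

lemma sep_reach:
  assumes "spanning_2forest_sep W ES F P1 P2" "\<forall>p q. {p,q} \<in> ES \<longrightarrow> q \<in> W"
    "(adj F)\<^sup>*\<^sup>* u u'" "u \<in> P1" "u' \<in> P2"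
  shows False
proof -
  obtain W1 W2 where W: "W1 \<inter> W2 = {}" "W1 \<union> W2 = W" "\<forall>x\<in>W1. \<forall>y\<in>W2. {x, y} \<notin> F"
    "P1 \<subseteq> W1" "P2 \<subseteq> W2" and FES: "F \<subseteq> ES"
    using assms(1) unfolding spanning_2forest_sep_def by blast
  have "u' \<in> W1" using assms(3)
  proof (induction rule: rtranclp_induct)
    case base then show ?case using assms(4) W(4) by auto
  next
    case (step y z)
    then have "{y,z} \<in> F" by (simp add: adj_def)
    then have "z \<in> W" "z \<notin> W2" using FES assms(2) W(3) step.IH by auto
    then show ?case using W(2) by auto
  qed
  then show False using assms(5) W by auto
qed

lemma sep_not_conn:
  assumes "spanning_2forest_sep W ES F P1 P2" "\<forall>p q. {p,q} \<in> ES \<longrightarrow> q \<in> W"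
    "u \<in> P1" "u' \<in> P2"
  shows "\<not> connected_on W F"
proof
  assume "connected_on W F"
  moreover have "u \<in> W" "u' \<in> W" using assms(1,3,4) unfolding spanning_2forest_sep_def by blast+
  ultimately have "(adj F)\<^sup>*\<^sup>* u u'" unfolding connected_on_def by blast
  then show False by (rule sep_reach[OF assms(1,2) _ assms(3,4)])
qed

lemma sep_conn:
  assumes "spanning_2forest_sep W ES F P1 P2" "u \<in> P1" "u' \<in> P1"
  shows "(adj F)\<^sup>*\<^sup>* u u'"
proof -
  obtain W1 where "connected_on W1 F" "P1 \<subseteq> W1"
    using assms(1) unfolding spanning_2forest_sep_def by (elim exE conjE) (rule that, assumption+)
  then show ?thesis using assms(2,3) unfolding connected_on_def by blast
qed

lemma sep_mono:
  assumes "spanning_2forest_sep W ES F P1 P2" "Q1 \<subseteq> P1" "Q2 \<subseteq> P2"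
  shows "spanning_2forest_sep W ES F Q1 Q2"
proof -
  obtain W1 W2 where "F \<subseteq> ES" "\<not> has_cycle F" "W1 \<noteq> {}" "W2 \<noteq> {}" "W1 \<inter> W2 = {}"
    "W1 \<union> W2 = W" "connected_on W1 F" "connected_on W2 F" "\<forall>x\<in>W1. \<forall>y\<in>W2. {x, y} \<notin> F"
    "P1 \<subseteq> W1" "P2 \<subseteq> W2" by (rule sepE[OF assms(1)])
  then show ?thesis using assms(2,3) by (intro sepI[of F ES W1 W2]) auto
qed

lemma sep_add:
  assumes "spanning_2forest_sep W ES F P1 P2" "c \<in> W"
  shows "spanning_2forest_sep W ES F (insert c P1) P2 \<or> spanning_2forest_sep W ES F P1 (insert c P2)"
proof -
  obtain W1 W2 where W: "W1 \<noteq> {}" "W2 \<noteq> {}" "W1 \<inter> W2 = {}" "W1 \<union> W2 = W"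
        "connected_on W1 F" "connected_on W2 F" "(\<forall>x\<in>W1. \<forall>y\<in>W2. {x, y} \<notin> F)"
        "P1 \<subseteq> W1" "P2 \<subseteq> W2" and FE: "F \<subseteq> ES" "\<not> has_cycle F"
    using assms(1) unfolding spanning_2forest_sep_def by (elim exE conjE) (rule that, assumption+)
  show ?thesis
  proof (cases "c \<in> W1")
    case True
    then have "spanning_2forest_sep W ES F (insert c P1) P2"
      using W True FE by (intro sepI[of F ES W1 W2]) auto
    then show ?thesis by blast
  next
    case False
    then have "c \<in> W2" using W(4) assms(2) by blast
    then have "spanning_2forest_sep W ES F P1 (insert c P2)"
      using W \<open>c \<in> W2\<close> FE by (intro sepI[of F ES W1 W2]) auto
    then show ?thesis by blast
  qed
qed


theorem lemma4p2:
  fixes V :: "'a set" and E :: "'a set set" and v w a b c d e :: 'a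
  assumes "simple_graph V E"
    and "regular 4 V E"
    and "connected_on V E"
    and "odd (card V)"
    and "v \<in> V" and "w \<in> V" and "{v, w} \<in> E"
    and "nbrs E v \<inter> nbrs E w = {c}"
    and "nbrs E w = {v, a, b, c}"
    and "nbrs E v = {w, c, d, e}"
  defines "W \<equiv> V - {v, w}"
    and "ES \<equiv> {x \<in> E. v \<notin> x \<and> w \<notin> x}"
  shows "(\<exists>f. \<forall>X \<in> SP W ES {a, b, c} {d, e} \<union> SP W ES {a, b} {c, d, e}.
             f X \<in> SP W ES {a, b, c} {d, e} \<union> SP W ES {a, b} {c, d, e} \<and>
             f (f X) = X \<and> f X \<noteq> X)
         \<and> even (sP W ES {a, b, c} {d, e} + sP W ES {a, b} {c, d, e})"
proof -
  have finV: "finite V" using assms(1) by (simp add: simple_graph_def)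
  have sg: "\<forall>e\<in>E. \<exists>x y. x \<noteq> y \<and> x \<in> V \<and> y \<in> V \<and> e = {x, y}"
    using assms(1) unfolding simple_graph_def by (elim conjE)
  have Epair: "p \<noteq> q \<and> p \<in> V \<and> q \<in> V" if pqE: "{p,q} \<in> E" for p q
  proof -
    obtain x y where "x \<noteq> y" "x \<in> V" "y \<in> V" "{p,q} = {x,y}"
      using bspec[OF sg pqE] by (elim exE conjE) (rule that, assumption+)
    then show ?thesis by (auto simp: doubleton_eq_iff)
  qed
  have EPow: "E \<subseteq> Pow V"
  proof
    fix e assume "e \<in> E"
    then obtain x y where "x \<in> V" "y \<in> V" "e = {x,y}" using sg by meson
    then show "e \<in> Pow V" by auto
  qed
  have finES: "finite ES" using finite_subset[OF EPow] finV unfolding ES_def by auto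
  have ES_pair: "p \<noteq> q \<and> p \<in> W \<and> q \<in> W" if "{p,q} \<in> ES" for p q
    using that Epair unfolding ES_def W_def by auto
  have ESW: "\<forall>p q. {p,q} \<in> ES \<longrightarrow> q \<in> W" using ES_pair by blast
  have nb: "z \<in> nbrs E y \<longleftrightarrow> {y,z} \<in> E" for y z by (simp add: nbrs_def)
  have cw: "card {v,a,b,c} = 4" using assms(2,6,9) unfolding regular_def by metis
  have cv: "card {w,c,d,e} = 4" using assms(2,5,10) unfolding regular_def by metis
  have dw: "distinct [v,a,b,c]" by (rule card4_distinct[OF cw])
  have dv: "distinct [w,c,d,e]" by (rule card4_distinct[OF cv])
  have Ew: "{w,z} \<in> E" if "z \<in> {v,a,b,c}" for z using that assms(9) nb by blast
  have Ev: "{v,z} \<in> E" if "z \<in> {w,c,d,e}" for z using that assms(10) nb by blast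
  have aW: "a \<in> W" "b \<in> W" "c \<in> W"
    using Epair[OF Ew] dw unfolding W_def by auto
  have dW: "d \<in> W" "e \<in> W"
    using Epair[OF Ev] dv unfolding W_def by auto
  have "a \<notin> {d,e}" "b \<notin> {d,e}"
  proof -
    have "a \<in> nbrs E w" "b \<in> nbrs E w" using assms(9) by auto
    moreover have "d \<in> nbrs E v" "e \<in> nbrs E v" using assms(10) by auto
    ultimately show "a \<notin> {d,e}" "b \<notin> {d,e}" using assms(8) dw by auto
  qed
  then have dist: "a \<noteq> d" "a \<noteq> e" "b \<noteq> d" "b \<noteq> e" "a \<noteq> c" "b \<noteq> c" "c \<noteq> d" "c \<noteq> e"
    using dw dv by auto
  have cvw: "c \<noteq> v" "c \<noteq> w" using dw dv by auto
  have vw: "v \<noteq> w" using Epair[OF assms(7)] by simp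
  define N where "N = nbrs E c"
  have cN: "card N = 4" using assms(2) aW(3) unfolding regular_def N_def W_def by auto
  have vN: "v \<in> N" "w \<in> N"
    using Ev[of c] Ew[of c] unfolding N_def nbrs_def by (auto simp: insert_commute)
  have finN: "finite N" using Epair finV unfolding N_def nbrs_def
    by (metis (no_types, lifting) mem_Collect_eq rev_finite_subset subsetI)
  have "card (N - {v,w}) = 2"
    using card_Diff_subset[of "{v,w}" N] vN vw cN by auto
  then obtain n1 n2 where n12: "n1 \<noteq> n2" "N - {v,w} = {n1,n2}" by (metis card_2_iff)
  have cES: "{c,z} \<in> ES \<longleftrightarrow> z = n1 \<or> z = n2" for z
  proof -
    have "{c,z} \<in> ES \<longleftrightarrow> z \<in> N - {v,w}"
      using cvw unfolding ES_def N_def nbrs_def by auto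
    then show ?thesis using n12 by auto
  qed
  have nW: "n1 \<in> W" "n2 \<in> W" "n1 \<noteq> c" "n2 \<noteq> c"
    using ES_pair[of c n1] ES_pair[of c n2] cES by auto
  define D where "D = {{c,n1},{c,n2}}"
  define \<sigma> where "\<sigma> Z = (Z - D) \<union> (D - Z)" for Z :: "'a set set"
  have DES: "D \<subseteq> ES" unfolding D_def using cES by auto
  have \<sigma>\<sigma>: "\<sigma> (\<sigma> Z) = Z" for Z unfolding \<sigma>_def by auto
  define Good where "Good T \<longleftrightarrow> spanning_tree W ES T \<and> spanning_2forest_sep W ES (ES - T) {a,b} {d,e}" for T

  have key: "Good (\<sigma> T) \<and> \<sigma> (ES - T) = ES - \<sigma> T" if G: "Good T" for T
  proof -
    have tr: "spanning_tree W ES T" and sp: "spanning_2forest_sep W ES (ES - T) {a,b} {d,e}"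
      using G unfolding Good_def by auto
    have TES: "T \<subseteq> ES" and Tconn: "connected_on W T" and Tac: "\<not> has_cycle T"
      using tr unfolding spanning_tree_def by auto
    obtain W1 W2 where FES: "ES - T \<subseteq> ES" and Fac: "\<not> has_cycle (ES - T)"
      and W: "W1 \<noteq> {}" "W2 \<noteq> {}" "W1 \<inter> W2 = {}"
      "W1 \<union> W2 = W" "connected_on W1 (ES - T)" "connected_on W2 (ES - T)"
      "\<forall>x\<in>W1. \<forall>y\<in>W2. {x, y} \<notin> ES - T" "{a,b} \<subseteq> W1" "{d,e} \<subseteq> W2"
      by (rule sepE[OF sp])
    have "(adj T)\<^sup>*\<^sup>* c a" using Tconn aW unfolding connected_on_def by blast
    then obtain z where "adj T c z" using dist(5)
      by (metis converse_rtranclpE)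
    then have z: "{c,z} \<in> T" by (simp add: adj_def)
    have "\<exists>z'. {c,z'} \<in> ES - T"
    proof (cases "c \<in> W1")
      case True
      then have "(adj (ES - T))\<^sup>*\<^sup>* c a" using W(5,8) unfolding connected_on_def by blast
      then obtain z' where "adj (ES - T) c z'" using dist(5) by (metis converse_rtranclpE)
      then show ?thesis by (auto simp: adj_def)
    next
      case False
      then have "c \<in> W2" using W(4) aW by blast
      then have "(adj (ES - T))\<^sup>*\<^sup>* c d" using W(6,9) unfolding connected_on_def by blast
      then obtain z' where "adj (ES - T) c z'" using dist(7) by (metis converse_rtranclpE)
      then show ?thesis by (auto simp: adj_def)
    qed
    then obtain z' where z': "{c,z'} \<in> ES - T" by blast
    define p where "p = z"
    define q where "q = z'"
    have pq: "{p,q} = {n1,n2}" "{c,p} \<in> T" "{c,q} \<notin> T" "{c,q} \<in> ES" "p \<noteq> q"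
      using z z' TES cES n12(1) unfolding p_def q_def by (auto simp: doubleton_eq_iff)
    have pqW: "p \<in> W" "q \<in> W" "p \<noteq> c" "q \<noteq> c" using pq(1) nW by (auto simp: doubleton_eq_iff)
    have Dpq: "D = {{c,p},{c,q}}" using pq(1) unfolding D_def by (auto simp: doubleton_eq_iff)
    have ne: "{c,p} \<noteq> {c,q}" using pq(5) by (auto simp: doubleton_eq_iff)
    have sT: "\<sigma> T = T - {{c,p}} \<union> {{c,q}}" unfolding \<sigma>_def Dpq using pq ne by auto
    have sF: "\<sigma> (ES - T) = (ES - T) - {{c,q}} \<union> {{c,p}}" unfolding \<sigma>_def Dpq using pq ne TES by auto
    have sF2: "\<sigma> (ES - T) = ES - \<sigma> T" unfolding \<sigma>_def using DES by auto
    have leafT: "\<forall>z. {c,z} \<in> T \<longrightarrow> z = p"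
    proof (intro allI impI)
      fix z assume "{c,z} \<in> T"
      then have "z \<in> {p,q}" "z \<noteq> q" using cES TES pq(1,3) by auto
      then show "z = p" by auto
    qed
    have leafF: "\<forall>z. {c,z} \<in> ES - T \<longrightarrow> z = q"
    proof (intro allI impI)
      fix z assume "{c,z} \<in> ES - T"
      then have "z \<in> {p,q}" "z \<noteq> p" using cES pq(1,2) by auto
      then show "z = q" by auto
    qed
    have qF: "{c,q} \<in> ES - T" using pq by auto
    have h: "\<forall>x\<in>W-{c}. \<forall>y\<in>W-{c}. (adj T)\<^sup>*\<^sup>* x y" using Tconn unfolding connected_on_def by blast
    have "connected_on (insert c W) (T - {{c,p}} \<union> {{c,q}})"
      by (rule conn_gen[OF h pqW(2) pqW(4) pq(2) leafT pqW(3)])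
    then have c1: "connected_on W (\<sigma> T)" using aW(3) sT by (simp add: insert_absorb)
    have a1: "\<not> has_cycle (\<sigma> T)" unfolding sT by (rule acyclic_move[OF Tac pq(2) leafT])
    have s1: "\<sigma> T \<subseteq> ES" unfolding sT using TES pq(4) by auto
    have tr': "spanning_tree W ES (\<sigma> T)" unfolding spanning_tree_def using c1 a1 s1 by auto
    have a2: "\<not> has_cycle (ES - \<sigma> T)" unfolding sF2[symmetric] sF
      by (rule acyclic_move[OF Fac qF leafF])
    have s2: "ES - \<sigma> T \<subseteq> ES" by auto
    have cross2: "\<forall>x\<in>W2. \<forall>y\<in>W1. {x, y} \<notin> ES - T"
    proof (intro ballI)
      fix x y assume "x \<in> W2" "y \<in> W1"
      then have "{y,x} \<notin> ES - T" using W(7) by blast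
      moreover have "{x,y} = {y,x}" by (rule insert_commute)
      ultimately show "{x,y} \<notin> ES - T" by simp
    qed
    have Hs: "ES - \<sigma> T = ES - T - {{c,q}} \<union> {{c,p}}" using sF sF2 by simp
    have sp': "spanning_2forest_sep W ES (ES - \<sigma> T) {a,b} {d,e}"
    proof (cases "c \<in> W1")
      case True
      have "q \<in> W1" using W(4,7) True qF pqW(2) by blast
      have pW: "p \<in> W1 \<union> W2" using W(4) pqW(1) by simp
      obtain A B where AB0: "A \<union> B = W1 \<union> W2" "A \<inter> B = {}" "A \<noteq> {}" "B \<noteq> {}"
        "connected_on A (ES - T - {{c,q}} \<union> {{c,p}})" "connected_on B (ES - T - {{c,q}} \<union> {{c,p}})"
        "\<forall>x\<in>A. \<forall>y\<in>B. {x,y} \<notin> ES - T - {{c,q}} \<union> {{c,p}}" "W1 - {c} \<subseteq> A" "W2 \<subseteq> B"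
        using move_sides[OF W(3) True \<open>q \<in> W1\<close> W(2) W(5) W(6) W(7) pW pqW(3) pqW(4) qF leafF]
        by (elim exE conjE) (rule that, assumption+)
      note AB = AB0[folded Hs]
      show ?thesis
        apply (rule sepI[OF s2 a2 AB(3,4,2)])
        using AB W(4,8,9) dist by auto
    next
      case False
      then have cW2: "c \<in> W2" using W(4) aW by blast
      have "q \<in> W2" using W(4) cross2 cW2 qF pqW(2) by blast
      have pW: "p \<in> W2 \<union> W1" using W(4) pqW(1) by auto
      have W21: "W2 \<inter> W1 = {}" using W(3) by auto
      obtain A B where AB0: "A \<union> B = W2 \<union> W1" "A \<inter> B = {}" "A \<noteq> {}" "B \<noteq> {}"
        "connected_on A (ES - T - {{c,q}} \<union> {{c,p}})" "connected_on B (ES - T - {{c,q}} \<union> {{c,p}})"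
        "\<forall>x\<in>B. \<forall>y\<in>A. {x,y} \<notin> ES - T - {{c,q}} \<union> {{c,p}}" "W2 - {c} \<subseteq> A" "W1 \<subseteq> B"
        using move_sides[OF W21 cW2 \<open>q \<in> W2\<close> W(1) W(6) W(5) cross2 pW pqW(3) pqW(4) qF leafF]
        by (elim exE conjE) (rule that, assumption+)
      note AB = AB0[folded Hs]
      show ?thesis
        apply (rule sepI[OF s2 a2 AB(4,3)])
        using AB W(4,8,9) dist by auto
    qed
    show ?thesis using tr' sp' sF2 unfolding Good_def by auto
  qed

  have SPsub: "SP W ES P1 P2 \<subseteq> Pow (Pow ES)" for P1 P2
    unfolding SP_def spanning_tree_def by auto
  have finSP: "finite (SP W ES P1 P2)" for P1 P2 using finite_subset[OF SPsub] finES by auto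
  define U where "U = SP W ES {a,b,c} {d,e} \<union> SP W ES {a,b} {c,d,e}"
  have eq1: "{a,b,c} = insert c {a,b}" by auto
  have eq2: "{c,d,e} = insert c {d,e}" by auto
  have memU: "X \<in> U \<longleftrightarrow> (\<exists>T. X = {T, ES - T} \<and> Good T)" for X
  proof
    assume "X \<in> U"
    then obtain T where T: "X = {T, ES-T}" "spanning_tree W ES T"
      "spanning_2forest_sep W ES (ES-T) {a,b,c} {d,e} \<or> spanning_2forest_sep W ES (ES-T) {a,b} {c,d,e}"
      unfolding U_def SP_def by blast
    have "spanning_2forest_sep W ES (ES-T) {a,b} {d,e}"
      using T(3) sep_mono[of W ES "ES-T" _ _ "{a,b}" "{d,e}"] by auto
    then show "\<exists>T. X = {T, ES - T} \<and> Good T" using T unfolding Good_def by blast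
  next
    assume "\<exists>T. X = {T, ES - T} \<and> Good T"
    then obtain T where X: "X = {T, ES-T}" "spanning_tree W ES T"
      "spanning_2forest_sep W ES (ES-T) {a,b} {d,e}" unfolding Good_def by blast
    from sep_add[OF X(3) aW(3)]
    have "spanning_2forest_sep W ES (ES-T) {a,b,c} {d,e} \<or> spanning_2forest_sep W ES (ES-T) {a,b} {c,d,e}"
      unfolding eq1 .
    then show "X \<in> U" unfolding U_def SP_def using X(1,2) by blast
  qed
  define f where "f X = \<sigma> ` X" for X
  have fprop: "f X \<in> U \<and> f (f X) = X \<and> f X \<noteq> X" if XU: "X \<in> U" for X
  proof -
    obtain T where X: "X = {T, ES-T}" "Good T" using memU[THEN iffD1, OF XU] by (elim exE conjE) (rule that, assumption+)
    have k: "Good (\<sigma> T)" "\<sigma> (ES-T) = ES - \<sigma> T" using key[OF X(2)] by auto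
    have fX: "f X = {\<sigma> T, ES - \<sigma> T}" unfolding f_def X(1) using k(2) by simp
    have "f X \<in> U" using fX k(1) by (intro memU[THEN iffD2] exI[of _ "\<sigma> T"]) simp
    moreover have "f (f X) = X" unfolding f_def image_image \<sigma>\<sigma> by simp
    moreover have "f X \<noteq> X"
    proof
      assume "f X = X"
      then have "\<sigma> T \<in> {T, ES - T}" using fX X(1) by auto
      moreover have "\<sigma> T \<noteq> T"
      proof
        assume st: "\<sigma> T = T"
        have "{c,n1} \<in> D" unfolding D_def by simp
        then have "{c,n1} \<in> \<sigma> T \<longleftrightarrow> {c,n1} \<notin> T" unfolding \<sigma>_def by auto
        then show False using st by simp
      qed
      moreover have "\<sigma> T \<noteq> ES - T"
      proof
        assume eq: "\<sigma> T = ES - T"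
        have "connected_on W (\<sigma> T)" using k(1) unfolding Good_def spanning_tree_def by auto
        moreover have sp: "spanning_2forest_sep W ES (ES-T) {a,b} {d,e}"
          using X(2) unfolding Good_def by auto
        have "\<not> connected_on W (ES - T)" using sep_not_conn[OF sp ESW, of a d] by simp
        ultimately show False using eq by simp
      qed
      ultimately show False by auto
    qed
    ultimately show ?thesis by blast
  qed
  have disj: "SP W ES {a,b,c} {d,e} \<inter> SP W ES {a,b} {c,d,e} = {}"
  proof (rule ccontr)
    assume "SP W ES {a,b,c} {d,e} \<inter> SP W ES {a,b} {c,d,e} \<noteq> {}"
    then obtain X where X1: "X \<in> SP W ES {a,b,c} {d,e}" and X2: "X \<in> SP W ES {a,b} {c,d,e}" by blast
    obtain T1 where T1: "X = {T1, ES-T1}" "spanning_tree W ES T1"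
      "spanning_2forest_sep W ES (ES-T1) {a,b,c} {d,e}" using X1 unfolding SP_def by blast
    obtain T2 where T2: "X = {T2, ES-T2}" "spanning_tree W ES T2"
      "spanning_2forest_sep W ES (ES-T2) {a,b} {c,d,e}" using X2 unfolding SP_def by blast
    have "T1 \<noteq> ES - T2"
    proof
      assume "T1 = ES - T2"
      moreover have "connected_on W T1" using T1(2) spanning_tree_def by auto
      moreover have "\<not> connected_on W (ES - T2)" using sep_not_conn[OF T2(3) ESW, of a c] by simp
      ultimately show False by simp
    qed
    then have "T1 = T2" using T1(1) T2(1) by (auto simp: doubleton_eq_iff)
    then have "(adj (ES-T2))\<^sup>*\<^sup>* a c" using sep_conn[OF T1(3), of a c] by simp
    then show False using sep_reach[OF T2(3) ESW, of a c] by simp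
  qed
  have finU: "finite U" unfolding U_def using finSP by auto
  have evU: "even (card U)" by (rule even_invol[OF finU, of f]) (use fprop in blast)
  have cU: "card U = sP W ES {a, b, c} {d, e} + sP W ES {a, b} {c, d, e}"
    unfolding U_def sP_def by (rule card_Un_disjoint[OF finSP finSP disj])
  show ?thesis
  proof (rule conjI)
    show "\<exists>f. \<forall>X \<in> SP W ES {a, b, c} {d, e} \<union> SP W ES {a, b} {c, d, e}.
             f X \<in> SP W ES {a, b, c} {d, e} \<union> SP W ES {a, b} {c, d, e} \<and>
             f (f X) = X \<and> f X \<noteq> X"
      apply (rule exI[of _ f], intro ballI)
      by (rule fprop[unfolded U_def])
    show "even (sP W ES {a, b, c} {d, e} + sP W ES {a, b} {c, d, e})" using evU cU by simp
  qed
qed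

end
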